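(* For any two probability distributions $\pi_V,\pi'_V$ on $\mathbb V$ and any $1\le q\le\mathsf n$, \[\big|\log\mathbb P_{\pi_V}(X_q\mid X_{q+1:\mathsf n})-\log\mathbb P_{\pi'_V}(X_q\mid X_{q+1:\mathsf n})\big|\le2\sum_{\ell=0}^{\mathsf n+1-q}(\nu_q\nu_{q+\ell-1}\nu_{q+\ell})^{-1}\Big(\prod_{k=q+1}^{q+\ell-1}(1-\nu_k)\Big)\|\pi_V-\pi'_V\|_{\mathsf{tv}},\] for every realization of the observations (empty products equal $1$).
   Context: Let $\mathsf n\ge1$, $\mathbb V$ a measurable space, $\mathbb X$ a discrete set, and $K_i:\mathbb X\times\mathbb V^2\to[0,\infty)$ for $i\in\mathbb Z$, each $K_i(\cdot,v,w)$ a probability on $\mathbb X$. For a probability $\pi_V$ on $\mathbb V$, $\mathbb P_{\pi_V}$ is the law of $(V_{1:\mathsf n+1},X_{1:\mathsf n})$ with $V_i$ i.i.d. $\pi_V$ and, given $V$, $X_i$ independent with $\mathbb P(X_i=x\mid V)=K_i(x,V_i,V_{i+1})$; $\mathbb P_{\pi_V}(X_q\mid X_{q+1:\mathsf n})$ is the conditional probability of the observed value of $X_q$ given the observed $X_{q+1:\mathsf n}$. Assumption H2: there exist $\nu_i>0$ ($i\in\mathbb Z$) with $\nu_i\le K_i(x,v,w)\le1$ for all $x,i,v,w$. $\|\xi\|_{\mathsf{tv}}=\sup\{\int f\,d\xi:\|f\|_\infty=1\}$. *)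

theory Defs
  imports "HOL-Probability.Probability"
begin

text \<open>The hidden variables V_1, ..., V_{n+1} are i.i.d. with law
  \<pi>, and given V the X_i are independent with P(X_i = y | V) = K i y V_i V_{i+1}; the
  probability of the observed values x_{a:n} is therefore the expectation of the product
  of the corresponding kernel values (an empty product being 1).\<close>
definition obs_prob ::
  "'v measure \<Rightarrow> (int \<Rightarrow> 'x \<Rightarrow> 'v \<Rightarrow> 'v \<Rightarrow> real) \<Rightarrow> int \<Rightarrow> int \<Rightarrow> (int \<Rightarrow> 'x) \<Rightarrow> real"
where
  "obs_prob \<pi> K n a x =
     (\<integral> v. (\<Prod>i\<in>{a..n}. K i (x i) (v i) (v (i + 1))) \<partial>(PiM {1..n+1} (\<lambda>_. \<pi>)))"

definition cond_prob ::
  "'v measure \<Rightarrow> (int \<Rightarrow> 'x \<Rightarrow> 'v \<Rightarrow> 'v \<Rightarrow> real) \<Rightarrow> int \<Rightarrow> int \<Rightarrow> (int \<Rightarrow> 'x) \<Rightarrow> real"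
where
  "cond_prob \<pi> K n q x = obs_prob \<pi> K n q x / obs_prob \<pi> K n (q + 1) x"

definition tv_norm :: "'v measure \<Rightarrow> 'v measure \<Rightarrow> 'v measure \<Rightarrow> real" where
  "tv_norm M \<pi> \<pi>' =
     Sup {(\<integral> v. f v \<partial>\<pi>) - (\<integral> v. f v \<partial>\<pi>') | f.
            f \<in> borel_measurable M \<and> bounded (f ` space M) \<and>
            (SUP v\<in>space M. \<bar>f v\<bar>) = 1}"

end

theory Submission
  imports Defs
begin

lemma tv_basic:
  fixes M \<pi> \<pi>' :: "'v measure"
  assumes \<pi>: "prob_space \<pi>" "sets \<pi> = sets M" and \<pi>': "prob_space \<pi>'" "sets \<pi>' = sets M"
  shows "0 \<le> tv_norm M \<pi> \<pi>' \<and>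
    (\<forall>f S. f \<in> borel_measurable M \<longrightarrow> (\<forall>v\<in>space M. \<bar>f v\<bar> \<le> S) \<longrightarrow>
       \<bar>(\<integral>v. f v \<partial>\<pi>) - (\<integral>v. f v \<partial>\<pi>')\<bar> \<le> S * tv_norm M \<pi> \<pi>')"
proof -
  interpret P: prob_space \<pi> by fact
  interpret P': prob_space \<pi>' by fact
  have sp: "space \<pi> = space M" "space \<pi>' = space M" using \<pi>(2) \<pi>'(2) sets_eq_imp_space_eq by blast+
  have ne: "space M \<noteq> {}" using P.not_empty sp by simp
  define St where "St = {(\<integral> v. f v \<partial>\<pi>) - (\<integral> v. f v \<partial>\<pi>') | f :: 'v \<Rightarrow> real.
            f \<in> borel_measurable M \<and> bounded (f ` space M) \<and> (SUP v\<in>space M. \<bar>f v\<bar>) = 1}"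
  have tv: "tv_norm M \<pi> \<pi>' = Sup St" unfolding tv_norm_def St_def ..
  have intb: "\<bar>\<integral>v. f v \<partial>N\<bar> \<le> S" if N: "prob_space N" "sets N = sets M"
    and f: "f \<in> borel_measurable M" and b: "\<forall>v\<in>space M. \<bar>f v\<bar> \<le> S" for f :: "'v \<Rightarrow> real" and S :: real and N :: "'v measure"
  proof -
    interpret N: prob_space N by fact
    have spN: "space N = space M" using N(2) sets_eq_imp_space_eq by blast
    have fm: "f \<in> borel_measurable N" using f N(2) measurable_cong_sets by blast
    have i: "integrable N f" by (rule N.integrable_const_bound[where B=S]) (use b spN fm in auto)
    have "\<bar>\<integral>v. f v \<partial>N\<bar> \<le> (\<integral>v. \<bar>f v\<bar> \<partial>N)" by (rule integral_abs_bound)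
    also have "\<dots> \<le> S" by (rule N.integral_le_const) (use i b spN in auto)
    finally show ?thesis .
  qed
  have mem: "(\<integral> v. f v \<partial>\<pi>) - (\<integral> v. f v \<partial>\<pi>') \<in> St"
    if "f \<in> borel_measurable M" "bounded (f ` space M)" "(SUP v\<in>space M. \<bar>f v\<bar>) = 1" for f
    unfolding St_def using that by blast
  have bdd: "bdd_above St"
  proof (rule bdd_aboveI[of _ 2])
    fix y assume "y \<in> St"
    then obtain f where y: "y = (\<integral> v. f v \<partial>\<pi>) - (\<integral> v. f v \<partial>\<pi>')" and f: "f \<in> borel_measurable M"
      "bounded (f ` space M)" "(SUP v\<in>space M. \<bar>f v\<bar>) = 1" unfolding St_def by blast
    have "bdd_above ((\<lambda>v. \<bar>f v\<bar>) ` space M)" using f(2) unfolding bounded_iff bdd_above_def by force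
    hence b: "\<forall>v\<in>space M. \<bar>f v\<bar> \<le> 1" using f(3) cSUP_upper by metis
    show "y \<le> 2" using intb[OF \<pi> f(1) b] intb[OF \<pi>' f(1) b] y by linarith
  qed
  have "0 \<in> St"
  proof -
    have "(\<integral> v. (\<lambda>_. 1::real) v \<partial>\<pi>) - (\<integral> v. (\<lambda>_. 1::real) v \<partial>\<pi>') \<in> St"
      by (rule mem) (use ne in \<open>auto simp: bounded_iff\<close>)
    thus ?thesis by (simp add: P.prob_space P'.prob_space)
  qed
  hence tv0: "0 \<le> tv_norm M \<pi> \<pi>'" unfolding tv using bdd by (rule cSup_upper)
  have main: "\<bar>(\<integral>v. f v \<partial>\<pi>) - (\<integral>v. f v \<partial>\<pi>')\<bar> \<le> S * tv_norm M \<pi> \<pi>'"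
    if f: "f \<in> borel_measurable M" and b: "\<forall>v\<in>space M. \<bar>f v\<bar> \<le> S" for f :: "'v \<Rightarrow> real" and S :: real
  proof -
    have bd: "bdd_above ((\<lambda>v. \<bar>f v\<bar>) ` space M)" using b by (auto intro: bdd_aboveI2)
    define s where "s = (SUP v\<in>space M. \<bar>f v\<bar>)"
    have fs: "\<forall>v\<in>space M. \<bar>f v\<bar> \<le> s" unfolding s_def using bd cSUP_upper by metis
    have sS: "s \<le> S" unfolding s_def using ne b by (intro cSUP_least) auto
    have s0: "0 \<le> s" using fs ne by force
    show ?thesis
    proof (cases "s = 0")
      case True
      have "\<bar>\<integral>v. f v \<partial>\<pi>\<bar> \<le> 0" "\<bar>\<integral>v. f v \<partial>\<pi>'\<bar> \<le> 0"
        using intb[OF \<pi> f, of 0] intb[OF \<pi>' f, of 0] fs True by auto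
      moreover have "0 \<le> S * tv_norm M \<pi> \<pi>'" using sS s0 tv0 by simp
      ultimately show ?thesis by linarith
    next
      case False
      hence sp0: "s > 0" using s0 by simp
      define g where "g = (\<lambda>v. f v / s)"
      have gm: "g \<in> borel_measurable M" "(\<lambda>v. - g v) \<in> borel_measurable M" unfolding g_def using f by measurable
      have gb: "\<forall>v\<in>space M. \<bar>g v\<bar> \<le> 1" unfolding g_def using fs sp0 by (simp add: abs_div)
      have bg: "bounded (g ` space M)" "bounded ((\<lambda>v. - g v) ` space M)"
        unfolding bounded_iff using gb by auto
      have "(SUP v\<in>space M. \<bar>g v\<bar>) = (SUP v\<in>space M. \<bar>f v\<bar> / s)"
        unfolding g_def using sp0 by (simp add: abs_div)
      also have "\<dots> = s / s"
      proof (rule antisym)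
        show "(SUP v\<in>space M. \<bar>f v\<bar> / s) \<le> s / s"
          using ne fs sp0 by (intro cSUP_least) (auto simp: divide_right_mono)
        have "(SUP v\<in>space M. \<bar>f v\<bar>) \<le> (SUP v\<in>space M. \<bar>f v\<bar> / s) * s"
        proof (rule cSUP_least[OF ne])
          fix v assume v: "v \<in> space M"
          have "\<bar>f v\<bar> / s \<le> (SUP v\<in>space M. \<bar>f v\<bar> / s)"
            using gb v sp0 by (intro cSUP_upper[OF v]) (auto intro!: bdd_aboveI2[of _ _ 1] simp: g_def abs_div)
          thus "\<bar>f v\<bar> \<le> (SUP v\<in>space M. \<bar>f v\<bar> / s) * s" using sp0 by (simp add: field_simps)
        qed
        hence "s \<le> (SUP v\<in>space M. \<bar>f v\<bar> / s) * s" unfolding s_def[symmetric] .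
        thus "s / s \<le> (SUP v\<in>space M. \<bar>f v\<bar> / s)" using sp0 by (simp add: field_simps)
      qed
      finally have sg: "(SUP v\<in>space M. \<bar>g v\<bar>) = 1" using sp0 by simp
      have sg': "(SUP v\<in>space M. \<bar>- g v\<bar>) = 1" using sg by simp
      have m1: "(\<integral> v. g v \<partial>\<pi>) - (\<integral> v. g v \<partial>\<pi>') \<le> tv_norm M \<pi> \<pi>'"
        unfolding tv using mem[OF gm(1) bg(1) sg] bdd by (rule cSup_upper)
      have m2: "(\<integral> v. - g v \<partial>\<pi>) - (\<integral> v. - g v \<partial>\<pi>') \<le> tv_norm M \<pi> \<pi>'"
        unfolding tv using mem[OF gm(2) bg(2) sg'] bdd by (rule cSup_upper)
      have e: "(\<integral>v. f v \<partial>N) = s * (\<integral> v. g v \<partial>N)" for N :: "'v measure"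
        unfolding g_def using sp0 by simp
      have "\<bar>(\<integral>v. f v \<partial>\<pi>) - (\<integral>v. f v \<partial>\<pi>')\<bar> = s * \<bar>(\<integral> v. g v \<partial>\<pi>) - (\<integral> v. g v \<partial>\<pi>')\<bar>"
        unfolding e using sp0 by (simp add: abs_mult right_diff_distrib[symmetric])
      also have "\<dots> \<le> s * tv_norm M \<pi> \<pi>'" using m1 m2 sp0 by (intro mult_left_mono) auto
      also have "\<dots> \<le> S * tv_norm M \<pi> \<pi>'" using sS tv0 by (rule mult_right_mono)
      finally show ?thesis .
    qed
  qed
  show ?thesis using tv0 main by blast
qed



lemma ln_bound:
  assumes "0 < L" "L \<le> x" "L \<le> (y::real)"
  shows "\<bar>ln x - ln y\<bar> \<le> \<bar>x - y\<bar> / L"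
proof -
  have g: "ln a - ln b \<le> (a - b) / L" if "L \<le> b" "b \<le> a" for a b
  proof -
    have b0: "0 < b" "0 < a" using that assms by auto
    have "ln a - ln b = ln (a / b)" using b0 by (simp add: ln_div)
    also have "\<dots> \<le> a / b - 1" using b0 by (intro ln_le_minus_one) simp
    also have "\<dots> = (a - b) / b" using b0 by (simp add: field_simps)
    also have "\<dots> \<le> (a - b) / L" using that assms by (intro divide_left_mono) auto
    finally show ?thesis .
  qed
  show ?thesis
  proof (cases "y \<le> x")
    case True
    have "0 \<le> ln x - ln y" using True assms by simp
    thus ?thesis using g[of y x] True assms by simp
  next
    case False
    have "0 \<le> ln y - ln x" using False assms by simp
    thus ?thesis using g[of x y] False assms by simp
  qed
qed

lemma integ0:
  assumes N: "prob_space N" "sets N = sets M" and g: "g \<in> borel_measurable M"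
    and b: "\<And>w. w \<in> space M \<Longrightarrow> \<bar>g w\<bar> \<le> (B::real)"
  shows "integrable N g"
proof -
  interpret N: prob_space N by fact
  have sp: "space N = space M" using N(2) sets_eq_imp_space_eq by blast
  have gm: "g \<in> borel_measurable N" using g N(2) measurable_cong_sets by blast
  show ?thesis by (rule N.integrable_const_bound[where B=B]) (use b sp gm in auto)
qed

lemma int_ge_le0:
  assumes N: "prob_space N" "sets N = sets M" and g: "g \<in> borel_measurable M"
    and b: "\<And>w. w \<in> space M \<Longrightarrow> c \<le> g w \<and> g w \<le> (d::real)"
  shows "c \<le> (\<integral>w. g w \<partial>N) \<and> (\<integral>w. g w \<partial>N) \<le> d"
proof -
  interpret N: prob_space N by fact
  have sp: "space N = space M" using N(2) sets_eq_imp_space_eq by blast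
  have i: "integrable N g" by (rule integ0[OF N g, of "\<bar>c\<bar> + \<bar>d\<bar>"]) (use b in force)
  show ?thesis using N.integral_ge_const[OF i, of c] N.integral_le_const[OF i, of d] b sp
    by auto
qed

lemma ratio_abs:
  fixes M \<pi> \<pi>' :: "'v measure"
  assumes \<pi>: "prob_space \<pi>" "sets \<pi> = sets M" and \<pi>': "prob_space \<pi>'" "sets \<pi>' = sets M"
    and cm: "c \<in> borel_measurable M" and em: "e \<in> borel_measurable M"
    and P: "0 < P" and \<rho>: "0 < \<rho>" and D: "0 \<le> D" and L: "0 < L" "L \<le> m"
    and b: "\<And>v. v \<in> space M \<Longrightarrow> \<rho> * P \<le> c v \<and> c v \<le> P \<and> 0 \<le> e v \<and> e v \<le> D * c v"
  shows "\<bar>ln (m + (\<integral>v. e v \<partial>\<pi>) / (\<integral>v. c v \<partial>\<pi>)) - ln (m + (\<integral>v. e v \<partial>\<pi>') / (\<integral>v. c v \<partial>\<pi>'))\<bar>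
    \<le> 2 * D * tv_norm M \<pi> \<pi>' / (L * \<rho>)"
proof -
  note tvb = tv_basic[OF \<pi> \<pi>']
  define tv where "tv = tv_norm M \<pi> \<pi>'"
  have tv0: "0 \<le> tv" using tvb tv_def by simp
  have intb: "\<rho> * P \<le> (\<integral>v. c v \<partial>N) \<and> (\<integral>v. c v \<partial>N) \<le> P \<and> 0 \<le> (\<integral>v. e v \<partial>N) \<and> (\<integral>v. e v \<partial>N) \<le> D * (\<integral>v. c v \<partial>N)"
    if N: "prob_space N" "sets N = sets M" for N
  proof -
    interpret N: prob_space N by fact
    have sp: "space N = space M" using N(2) sets_eq_imp_space_eq by blast
    have c0: "0 \<le> c v" if "v \<in> space M" for v using b[OF that] P \<rho> by (smt (verit) mult_pos_pos)
    have ic: "integrable N c" by (rule integ0[OF N cm, of P]) (use b c0 in force)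
    have ie: "integrable N e" by (rule integ0[OF N em, of "D * P"])
      (use b c0 D in \<open>force intro: order_trans[OF _ mult_left_mono]\<close>)
    have "\<rho> * P \<le> (\<integral>v. c v \<partial>N) \<and> (\<integral>v. c v \<partial>N) \<le> P" by (rule int_ge_le0[OF N cm]) (use b in force)
    moreover have "0 \<le> (\<integral>v. e v \<partial>N)" by (rule integral_nonneg_AE) (use b sp in auto)
    moreover have "(\<integral>v. e v \<partial>N) \<le> (\<integral>v. D * c v \<partial>N)" by (rule integral_mono[OF ie]) (use ic b sp in auto)
    ultimately show ?thesis by simp
  qed
  define C where "C = (\<integral>v. c v \<partial>\<pi>)"
  define C' where "C' = (\<integral>v. c v \<partial>\<pi>')"
  define E where "E = (\<integral>v. e v \<partial>\<pi>)"
  define E' where "E' = (\<integral>v. e v \<partial>\<pi>')"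
  have bC: "\<rho> * P \<le> C" "C \<le> P" "0 \<le> E" "E \<le> D * C" using intb[OF \<pi>] unfolding C_def E_def by auto
  have bC': "\<rho> * P \<le> C'" "C' \<le> P" "0 \<le> E'" "E' \<le> D * C'" using intb[OF \<pi>'] unfolding C'_def E'_def by auto
  have Cp: "0 < C" "0 < C'" using bC(1) bC'(1) P \<rho> by (smt (verit) mult_pos_pos)+
  have dC: "\<bar>C - C'\<bar> \<le> P * tv" unfolding C_def C'_def tv_def
    using tvb cm b by (smt (verit) mult_pos_pos P \<rho>)
  have dE: "\<bar>E - E'\<bar> \<le> (D * P) * tv" unfolding E_def E'_def tv_def
  proof -
    have "\<forall>v\<in>space M. \<bar>e v\<bar> \<le> D * P"
    proof
      fix v assume v: "v \<in> space M"
      have "D * c v \<le> D * P" using b[OF v] D by (intro mult_left_mono) auto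
      thus "\<bar>e v\<bar> \<le> D * P" using b[OF v] by simp
    qed
    thus "\<bar>(\<integral>v. e v \<partial>\<pi>) - (\<integral>v. e v \<partial>\<pi>')\<bar> \<le> D * P * tv_norm M \<pi> \<pi>'" using tvb em by blast
  qed
  have "E / C - E' / C' = (E - E') / C + E' * (C' - C) / (C * C')"
    using Cp by (simp add: field_simps)
  hence "\<bar>E / C - E' / C'\<bar> \<le> \<bar>E - E'\<bar> / C + E' * \<bar>C' - C\<bar> / (C * C')"
    using Cp bC' by (simp add: abs_mult abs_div abs_triangle_ineq order_trans[OF abs_triangle_ineq])
  also have "\<bar>E - E'\<bar> / C \<le> D * tv / \<rho>"
  proof -
    have "\<bar>E - E'\<bar> / C \<le> (D * P * tv) / (\<rho> * P)"
      using dE bC Cp P \<rho> D tv0 by (intro frac_le) auto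
    also have "\<dots> = D * tv / \<rho>" using P by simp
    finally show ?thesis .
  qed
  also have "E' * \<bar>C' - C\<bar> / (C * C') \<le> D * tv / \<rho>"
  proof -
    have "E' * \<bar>C' - C\<bar> / (C * C') \<le> (D * C') * (P * tv) / (C * C')"
      using bC' dC Cp by (intro divide_right_mono mult_mono) (auto simp: abs_minus_commute)
    also have "\<dots> = D * P * tv / C" using Cp by simp
    also have "\<dots> \<le> D * P * tv / (\<rho> * P)" using bC Cp P \<rho> D tv0 by (intro divide_left_mono) auto
    also have "\<dots> = D * tv / \<rho>" using P by simp
    finally show ?thesis .
  qed
  finally have R: "\<bar>E / C - E' / C'\<bar> \<le> 2 * D * tv / \<rho>" by simp
  have "0 \<le> E / C" "0 \<le> E' / C'" using bC bC' Cp by auto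
  hence g1: "L \<le> m + E / C" "L \<le> m + E' / C'" using L by linarith+
  have "\<bar>ln (m + E / C) - ln (m + E' / C')\<bar> \<le> \<bar>(m + E / C) - (m + E' / C')\<bar> / L"
    by (rule ln_bound[OF L(1) g1])
  also have "\<dots> = \<bar>E / C - E' / C'\<bar> / L" by simp
  also have "\<dots> \<le> (2 * D * tv / \<rho>) / L" using R L by (intro divide_right_mono) auto
  finally show ?thesis unfolding C_def C'_def E_def E'_def tv_def by (simp add: mult.commute)
qed



locale hmm =
  fixes M :: "'v measure" and K :: "int \<Rightarrow> 'x \<Rightarrow> 'v \<Rightarrow> 'v \<Rightarrow> real"
    and \<nu> :: "int \<Rightarrow> real" and n :: int and x :: "int \<Rightarrow> 'x"
  assumes Kmeas: "\<And>i y. (\<lambda>(v, w). K i y v w) \<in> borel_measurable (M \<Otimes>\<^sub>M M)"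
    and \<nu>pos: "\<And>i. 0 < \<nu> i"
    and H2: "\<And>i y v w. v \<in> space M \<Longrightarrow> w \<in> space M \<Longrightarrow> \<nu> i \<le> K i y v w \<and> K i y v w \<le> 1"
begin

definition good :: "(int \<Rightarrow> 'v measure) \<Rightarrow> bool" where
  "good \<mu> \<longleftrightarrow> (\<forall>i. prob_space (\<mu> i) \<and> sets (\<mu> i) = sets M)"

function beta :: "(int \<Rightarrow> 'v measure) \<Rightarrow> int \<Rightarrow> 'v \<Rightarrow> real" where
  "beta \<mu> i = (if n < i then (\<lambda>_. 1) else (\<lambda>v. \<integral>w. K i (x i) v w * beta \<mu> (i+1) w \<partial>(\<mu> (i+1))))"
  by auto
termination by (relation "Wellfounded.measure (\<lambda>(\<mu>,i). nat (n + 1 - i))") auto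

function alpha :: "int \<Rightarrow> (int \<Rightarrow> 'v measure) \<Rightarrow> int \<Rightarrow> 'v \<Rightarrow> real" where
  "alpha s \<mu> i = (if i \<le> s then (\<lambda>_. 1) else (\<lambda>v. \<integral>u. alpha s \<mu> (i-1) u * K (i-1) (x (i-1)) u v \<partial>(\<mu> (i-1))))"
  by auto
termination by (relation "Wellfounded.measure (\<lambda>(s,\<mu>,i). nat (i - s))") auto

declare beta.simps[simp del] alpha.simps[simp del]

lemma int_meas:
  assumes N: "sets N = sets M" "prob_space N"
    and F: "(\<lambda>(v,w). F v w :: real) \<in> borel_measurable (M \<Otimes>\<^sub>M M)"
  shows "(\<lambda>v. \<integral>w. F v w \<partial>N) \<in> borel_measurable M"
proof -
  interpret N: prob_space N by fact
  have "sets (M \<Otimes>\<^sub>M N) = sets (M \<Otimes>\<^sub>M M)" by (rule sets_pair_measure_cong) (auto simp: N)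
  hence "(\<lambda>(v,w). F v w) \<in> borel_measurable (M \<Otimes>\<^sub>M N)" using F measurable_cong_sets by blast
  thus ?thesis by (rule N.borel_measurable_lebesgue_integral[of "\<lambda>v w. F v w", simplified])
qed

lemma int_meas2:
  assumes N: "sets N = sets M" "prob_space N"
    and F: "(\<lambda>(v,w). F v w :: real) \<in> borel_measurable (M \<Otimes>\<^sub>M M)"
  shows "(\<lambda>v. \<integral>w. F w v \<partial>N) \<in> borel_measurable M"
proof -
  have "(\<lambda>(v,w). F w v) \<in> borel_measurable (M \<Otimes>\<^sub>M M)"
    using measurable_comp[OF measurable_pair_swap' F] by (simp add: comp_def case_prod_beta)
  thus ?thesis using int_meas[OF N, of "\<lambda>v w. F w v"] by simp
qed

lemma beta_meas: "good \<mu> \<Longrightarrow> beta \<mu> i \<in> borel_measurable M"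
proof (induction \<mu> i rule: beta.induct)
  case (1 \<mu> i)
  show ?case
  proof (cases "n < i")
    case True then show ?thesis by (subst beta.simps) simp
  next
    case False
    have "(\<lambda>(v,w). K i (x i) v w * beta \<mu> (i+1) w) \<in> borel_measurable (M \<Otimes>\<^sub>M M)"
      using Kmeas[of i "x i"] 1 False
      by (auto intro!: borel_measurable_times measurable_compose[OF measurable_snd] simp: case_prod_beta)
    hence "(\<lambda>v. \<integral>w. K i (x i) v w * beta \<mu> (i+1) w \<partial>(\<mu> (i+1))) \<in> borel_measurable M"
      using 1(2) by (intro int_meas) (auto simp: good_def)
    then show ?thesis using False by (subst beta.simps) simp
  qed
qed


lemma alpha_meas: "good \<mu> \<Longrightarrow> alpha s \<mu> i \<in> borel_measurable M"
proof (induction s \<mu> i rule: alpha.induct)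
  case (1 s \<mu> i)
  show ?case
  proof (cases "i \<le> s")
    case True then show ?thesis by (subst alpha.simps) simp
  next
    case False
    have "(\<lambda>(v,w). alpha s \<mu> (i-1) v * K (i-1) (x (i-1)) v w) \<in> borel_measurable (M \<Otimes>\<^sub>M M)"
      using Kmeas[of "i-1" "x (i-1)"] 1 False
      by (auto intro!: borel_measurable_times measurable_compose[OF measurable_fst] simp: case_prod_beta)
    hence "(\<lambda>v. \<integral>u. alpha s \<mu> (i-1) u * K (i-1) (x (i-1)) u v \<partial>(\<mu> (i-1))) \<in> borel_measurable M"
      using 1(2) by (intro int_meas2[where F="\<lambda>u v. alpha s \<mu> (i-1) u * K (i-1) (x (i-1)) u v"]) (auto simp: good_def)
    then show ?thesis using False by (subst alpha.simps) simp
  qed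
qed

lemma good_space: "good \<mu> \<Longrightarrow> space (\<mu> i) = space M"
  unfolding good_def by (metis sets_eq_imp_space_eq)

lemma good_prob: "good \<mu> \<Longrightarrow> prob_space (\<mu> i)"
  unfolding good_def by auto

lemma good_sets: "good \<mu> \<Longrightarrow> sets (\<mu> i) = sets M"
  unfolding good_def by auto

lemma meas_good: "good \<mu> \<Longrightarrow> f \<in> borel_measurable M \<Longrightarrow> f \<in> borel_measurable (\<mu> i)"
  using good_sets measurable_cong_sets by blast

lemma int_bounds:
  assumes N: "prob_space N" "sets N = sets M"
    and g: "g \<in> borel_measurable M" and F: "F \<in> borel_measurable M"
    and b: "\<And>w. w \<in> space M \<Longrightarrow> a * g w \<le> F w \<and> F w \<le> g w \<and> 0 \<le> g w \<and> g w \<le> 1"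
    and a: "0 \<le> (a::real)"
  shows "a * (\<integral>w. g w \<partial>N) \<le> (\<integral>w. F w \<partial>N) \<and> (\<integral>w. F w \<partial>N) \<le> (\<integral>w. g w \<partial>N)"
proof -
  interpret N: prob_space N by fact
  have sp: "space N = space M" using N(2) sets_eq_imp_space_eq by blast
  have gm: "g \<in> borel_measurable N" and Fm: "F \<in> borel_measurable N"
    using g F N(2) measurable_cong_sets by blast+
  have Fb: "w \<in> space N \<Longrightarrow> norm (F w) \<le> 1" for w
  proof -
    assume w: "w \<in> space N"
    have "0 \<le> a * g w" using b[of w] a w sp by simp
    thus ?thesis using b[of w] w sp by simp
  qed
  have ig: "integrable N g" by (rule N.integrable_const_bound[where B=1]) (use b sp gm in auto)
  have iF: "integrable N F" by (rule N.integrable_const_bound[where B=1]) (use Fb Fm in auto)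
  have iag: "integrable N (\<lambda>w. a * g w)" using ig by simp
  have "(\<integral>w. a * g w \<partial>N) \<le> (\<integral>w. F w \<partial>N)"
    by (rule integral_mono[OF iag iF]) (use b sp in auto)
  moreover have "(\<integral>w. F w \<partial>N) \<le> (\<integral>w. g w \<partial>N)"
    by (rule integral_mono[OF iF ig]) (use b sp in auto)
  ultimately show ?thesis by simp
qed


lemma integ:
  assumes N: "prob_space N" "sets N = sets M" and g: "g \<in> borel_measurable M"
    and b: "\<And>w. w \<in> space M \<Longrightarrow> \<bar>g w\<bar> \<le> (B::real)"
  shows "integrable N g"
proof -
  interpret N: prob_space N by fact
  have sp: "space N = space M" using N(2) sets_eq_imp_space_eq by blast
  have gm: "g \<in> borel_measurable N" using g N(2) measurable_cong_sets by blast
  show ?thesis by (rule N.integrable_const_bound[where B=B]) (use b sp gm in auto)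
qed

lemma int_ge_le:
  assumes N: "prob_space N" "sets N = sets M" and g: "g \<in> borel_measurable M"
    and b: "\<And>w. w \<in> space M \<Longrightarrow> c \<le> g w \<and> g w \<le> (d::real)"
  shows "c \<le> (\<integral>w. g w \<partial>N) \<and> (\<integral>w. g w \<partial>N) \<le> d"
proof -
  interpret N: prob_space N by fact
  have sp: "space N = space M" using N(2) sets_eq_imp_space_eq by blast
  have i: "integrable N g" by (rule integ[OF N g, of "\<bar>c\<bar> + \<bar>d\<bar>"]) (use b in force)
  show ?thesis using N.integral_ge_const[OF i, of c] N.integral_le_const[OF i, of d] b sp
    by auto
qed

lemma Kmeas2: "v \<in> space M \<Longrightarrow> (\<lambda>w. K i y v w) \<in> borel_measurable M"
  using measurable_comp[OF measurable_Pair1' Kmeas[of i y]] by (simp add: comp_def)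

lemma Kmeas1: "w \<in> space M \<Longrightarrow> (\<lambda>v. K i y v w) \<in> borel_measurable M"
  using measurable_comp[OF measurable_Pair2' Kmeas[of i y]] by (simp add: comp_def)

lemma good_ne: "good \<mu> \<Longrightarrow> space M \<noteq> {}"
  using good_prob[of \<mu> 0] good_space[of \<mu> 0] prob_space.not_empty by fastforce

lemma \<nu>le1: "good \<mu> \<Longrightarrow> \<nu> i \<le> 1"
proof -
  assume "good \<mu>"
  then obtain v where "v \<in> space M" using good_ne by blast
  thus ?thesis using H2[of v v i] by fastforce
qed

lemma beta_step:
  assumes g: "good \<mu>" and i: "i \<le> n" and v: "v \<in> space M"
    and h: "\<And>w. w \<in> space M \<Longrightarrow> 0 \<le> beta \<mu> (i+1) w \<and> beta \<mu> (i+1) w \<le> 1"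
  shows "\<nu> i * (\<integral>w. beta \<mu> (i+1) w \<partial>\<mu> (i+1)) \<le> beta \<mu> i v \<and>
         beta \<mu> i v \<le> (\<integral>w. beta \<mu> (i+1) w \<partial>\<mu> (i+1))"
proof -
  have e: "beta \<mu> i v = (\<integral>w. K i (x i) v w * beta \<mu> (i+1) w \<partial>\<mu> (i+1))"
    using i by (subst beta.simps) simp
  show ?thesis unfolding e
  proof (rule int_bounds[OF good_prob[OF g] good_sets[OF g] beta_meas[OF g]])
    show "(\<lambda>w. K i (x i) v w * beta \<mu> (i + 1) w) \<in> borel_measurable M"
      using Kmeas2[OF v] beta_meas[OF g] by measurable
    show "0 \<le> \<nu> i" using \<nu>pos[of i] by simp
    fix w assume w: "w \<in> space M"
    show "\<nu> i * beta \<mu> (i + 1) w \<le> K i (x i) v w * beta \<mu> (i + 1) w \<and>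
         K i (x i) v w * beta \<mu> (i + 1) w \<le> beta \<mu> (i + 1) w \<and>
         0 \<le> beta \<mu> (i + 1) w \<and> beta \<mu> (i + 1) w \<le> 1"
      using H2[OF v w, of i "x i"] h[OF w] \<nu>pos[of i]
      by (auto intro: mult_right_mono mult_right_mono[of "K i (x i) v w" 1, simplified])
  qed
qed

lemma beta_pos: "good \<mu> \<Longrightarrow> \<exists>c>0. \<forall>v\<in>space M. c \<le> beta \<mu> i v \<and> beta \<mu> i v \<le> 1"
proof (induction \<mu> i rule: beta.induct)
  case (1 \<mu> i)
  show ?case
  proof (cases "n < i")
    case True then show ?thesis by (intro exI[of _ 1]) (simp add: beta.simps)
  next
    case False
    obtain c where c: "c > 0" "\<forall>v\<in>space M. c \<le> beta \<mu> (i+1) v \<and> beta \<mu> (i+1) v \<le> 1"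
      using 1 False by blast
    have I: "c \<le> (\<integral>w. beta \<mu> (i+1) w \<partial>\<mu> (i+1)) \<and> (\<integral>w. beta \<mu> (i+1) w \<partial>\<mu> (i+1)) \<le> 1"
      using c by (intro int_ge_le[OF good_prob[OF 1(2)] good_sets[OF 1(2)] beta_meas[OF 1(2)]]) auto
    show ?thesis
    proof (intro exI[of _ "\<nu> i * c"] conjI ballI)
      show "0 < \<nu> i * c" using \<nu>pos[of i] c by simp
      fix v assume v: "v \<in> space M"
      have s: "\<nu> i * (\<integral>w. beta \<mu> (i+1) w \<partial>\<mu> (i+1)) \<le> beta \<mu> i v \<and>
         beta \<mu> i v \<le> (\<integral>w. beta \<mu> (i+1) w \<partial>\<mu> (i+1))"
        by (rule beta_step[OF 1(2) _ v]) (use False c in force)+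
      have "\<nu> i * c \<le> \<nu> i * (\<integral>w. beta \<mu> (i+1) w \<partial>\<mu> (i+1))"
        using I \<nu>pos[of i] by simp
      thus "\<nu> i * c \<le> beta \<mu> i v" using s by linarith
      show "beta \<mu> i v \<le> 1" using s I by linarith
    qed
  qed
qed


lemma alpha_step:
  assumes g: "good \<mu>" and i: "s < i" and v: "v \<in> space M"
    and h: "\<And>w. w \<in> space M \<Longrightarrow> 0 \<le> alpha s \<mu> (i-1) w \<and> alpha s \<mu> (i-1) w \<le> 1"
  shows "\<nu> (i-1) * (\<integral>w. alpha s \<mu> (i-1) w \<partial>\<mu> (i-1)) \<le> alpha s \<mu> i v \<and>
         alpha s \<mu> i v \<le> (\<integral>w. alpha s \<mu> (i-1) w \<partial>\<mu> (i-1))"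
proof -
  have e: "alpha s \<mu> i v = (\<integral>w. K (i-1) (x (i-1)) w v * alpha s \<mu> (i-1) w \<partial>\<mu> (i-1))"
    using i by (subst alpha.simps) (simp add: mult.commute)
  show ?thesis unfolding e
  proof (rule int_bounds[OF good_prob[OF g] good_sets[OF g] alpha_meas[OF g]])
    show "(\<lambda>w. K (i-1) (x (i-1)) w v * alpha s \<mu> (i-1) w) \<in> borel_measurable M"
      using Kmeas1[OF v] alpha_meas[OF g] by measurable
    show "0 \<le> \<nu> (i-1)" using \<nu>pos[of "i-1"] by simp
    fix w assume w: "w \<in> space M"
    show "\<nu> (i-1) * alpha s \<mu> (i-1) w \<le> K (i-1) (x (i-1)) w v * alpha s \<mu> (i-1) w \<and>
         K (i-1) (x (i-1)) w v * alpha s \<mu> (i-1) w \<le> alpha s \<mu> (i-1) w \<and>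
         0 \<le> alpha s \<mu> (i-1) w \<and> alpha s \<mu> (i-1) w \<le> 1"
      using H2[OF w v, of "i-1" "x (i-1)"] h[OF w] \<nu>pos[of "i-1"]
      by (auto intro: mult_right_mono mult_right_mono[of "K (i-1) (x (i-1)) w v" 1, simplified])
  qed
qed

lemma alpha_pos: "good \<mu> \<Longrightarrow> \<exists>c>0. \<forall>v\<in>space M. c \<le> alpha s \<mu> i v \<and> alpha s \<mu> i v \<le> 1"
proof (induction s \<mu> i rule: alpha.induct)
  case (1 s \<mu> i)
  show ?case
  proof (cases "i \<le> s")
    case True then show ?thesis by (intro exI[of _ 1]) (simp add: alpha.simps)
  next
    case False
    obtain c where c: "c > 0" "\<forall>v\<in>space M. c \<le> alpha s \<mu> (i-1) v \<and> alpha s \<mu> (i-1) v \<le> 1"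
      using 1 False by blast
    have I: "c \<le> (\<integral>w. alpha s \<mu> (i-1) w \<partial>\<mu> (i-1)) \<and> (\<integral>w. alpha s \<mu> (i-1) w \<partial>\<mu> (i-1)) \<le> 1"
      using c by (intro int_ge_le[OF good_prob[OF 1(2)] good_sets[OF 1(2)] alpha_meas[OF 1(2)]]) auto
    show ?thesis
    proof (intro exI[of _ "\<nu> (i-1) * c"] conjI ballI)
      show "0 < \<nu> (i-1) * c" using \<nu>pos[of "i-1"] c by simp
      fix v assume v: "v \<in> space M"
      have s: "\<nu> (i-1) * (\<integral>w. alpha s \<mu> (i-1) w \<partial>\<mu> (i-1)) \<le> alpha s \<mu> i v \<and>
         alpha s \<mu> i v \<le> (\<integral>w. alpha s \<mu> (i-1) w \<partial>\<mu> (i-1))"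
        by (rule alpha_step[OF 1(2) _ v]) (use False c in force)+
      have "\<nu> (i-1) * c \<le> \<nu> (i-1) * (\<integral>w. alpha s \<mu> (i-1) w \<partial>\<mu> (i-1))"
        using I \<nu>pos[of "i-1"] by simp
      thus "\<nu> (i-1) * c \<le> alpha s \<mu> i v" using s by linarith
      show "alpha s \<mu> i v \<le> 1" using s I by linarith
    qed
  qed
qed

lemma fub:
  assumes N1: "prob_space N1" "sets N1 = sets M" and N2: "prob_space N2" "sets N2 = sets M"
    and F: "(\<lambda>(u,v). F u v :: real) \<in> borel_measurable (M \<Otimes>\<^sub>M M)"
    and b: "\<And>u v. u \<in> space M \<Longrightarrow> v \<in> space M \<Longrightarrow> \<bar>F u v\<bar> \<le> B"
  shows "(\<integral>v. (\<integral>u. F u v \<partial>N1) \<partial>N2) = (\<integral>u. (\<integral>v. F u v \<partial>N2) \<partial>N1)"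
proof -
  interpret N1: prob_space N1 by fact
  interpret N2: prob_space N2 by fact
  interpret P: pair_prob_space N1 N2 ..
  have s: "sets (N1 \<Otimes>\<^sub>M N2) = sets (M \<Otimes>\<^sub>M M)" by (rule sets_pair_measure_cong) (auto simp: N1 N2)
  hence sp: "space (N1 \<Otimes>\<^sub>M N2) = space (M \<Otimes>\<^sub>M M)" by (rule sets_eq_imp_space_eq)
  have Fm: "(\<lambda>(u,v). F u v) \<in> borel_measurable (N1 \<Otimes>\<^sub>M N2)" using F s measurable_cong_sets by blast
  have "integrable (N1 \<Otimes>\<^sub>M N2) (\<lambda>(u,v). F u v)"
    by (rule P.integrable_const_bound[where B=B]) (use Fm b sp in \<open>auto simp: space_pair_measure\<close>)
  thus ?thesis by (rule P.Fubini_integral)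
qed

lemma fwd:
  assumes g: "good \<mu>" and sj: "s \<le> j" and jn: "j \<le> n + 1"
  shows "(\<integral>v. alpha s \<mu> j v * beta \<mu> j v \<partial>\<mu> j) = (\<integral>v. beta \<mu> s v \<partial>\<mu> s)"
proof -
  have "j \<le> n + 1 \<longrightarrow> (\<integral>v. alpha s \<mu> j v * beta \<mu> j v \<partial>\<mu> j) = (\<integral>v. beta \<mu> s v \<partial>\<mu> s)"
    using sj
  proof (induction j rule: int_ge_induct)
    case base
    then show ?case by (simp add: alpha.simps)
  next
    case (step j)
    show ?case
    proof
      assume j1: "j + 1 \<le> n + 1"
      have ea: "alpha s \<mu> (j+1) v = (\<integral>u. alpha s \<mu> j u * K j (x j) u v \<partial>\<mu> j)" for v
        using step(1) by (subst alpha.simps) simp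
      have eb: "beta \<mu> j u = (\<integral>v. K j (x j) u v * beta \<mu> (j+1) v \<partial>\<mu> (j+1))" for u
        using j1 by (subst beta.simps) simp
      obtain ca where ca: "\<forall>v\<in>space M. ca \<le> alpha s \<mu> j v \<and> alpha s \<mu> j v \<le> 1" "ca > 0"
        using alpha_pos[OF g] by blast
      obtain cb where cb: "\<forall>v\<in>space M. cb \<le> beta \<mu> (j+1) v \<and> beta \<mu> (j+1) v \<le> 1" "cb > 0"
        using beta_pos[OF g] by blast
      have "(\<integral>v. alpha s \<mu> (j+1) v * beta \<mu> (j+1) v \<partial>\<mu> (j+1))
          = (\<integral>v. (\<integral>u. alpha s \<mu> j u * K j (x j) u v * beta \<mu> (j+1) v \<partial>\<mu> j) \<partial>\<mu> (j+1))"
        unfolding ea by simp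
      also have "\<dots> = (\<integral>u. (\<integral>v. alpha s \<mu> j u * K j (x j) u v * beta \<mu> (j+1) v \<partial>\<mu> (j+1)) \<partial>\<mu> j)"
      proof (rule fub[OF good_prob[OF g] good_sets[OF g] good_prob[OF g] good_sets[OF g], where B=1])
        show "(\<lambda>(u, v). alpha s \<mu> j u * K j (x j) u v * beta \<mu> (j + 1) v) \<in> borel_measurable (M \<Otimes>\<^sub>M M)"
          using Kmeas[of j "x j"] alpha_meas[OF g] beta_meas[OF g]
          by (auto intro!: borel_measurable_times measurable_compose[OF measurable_fst]
                measurable_compose[OF measurable_snd] simp: case_prod_beta)
        fix u v assume u: "u \<in> space M" and v: "v \<in> space M"
        have "0 \<le> alpha s \<mu> j u" "alpha s \<mu> j u \<le> 1" using ca u by force+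
        moreover have "0 \<le> beta \<mu> (j+1) v" "beta \<mu> (j+1) v \<le> 1" using cb v by force+
        moreover have "0 \<le> K j (x j) u v" "K j (x j) u v \<le> 1" using H2[OF u v, of j "x j"] \<nu>pos[of j] by auto
        ultimately show "\<bar>alpha s \<mu> j u * K j (x j) u v * beta \<mu> (j + 1) v\<bar> \<le> 1"
          by (simp add: abs_mult mult_le_one)
      qed
      also have "\<dots> = (\<integral>u. alpha s \<mu> j u * beta \<mu> j u \<partial>\<mu> j)"
        unfolding eb by (simp add: mult.assoc)
      also have "\<dots> = (\<integral>v. beta \<mu> s v \<partial>\<mu> s)" using step j1 by simp
      finally show "(\<integral>v. alpha s \<mu> (j+1) v * beta \<mu> (j+1) v \<partial>\<mu> (j+1)) = (\<integral>v. beta \<mu> s v \<partial>\<mu> s)" .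
    qed
  qed
  thus ?thesis using jn by simp
qed


lemma aux_mult: "0 \<le> (g::real) \<Longrightarrow> c \<le> k \<Longrightarrow> k \<le> 1 \<Longrightarrow> c * g \<le> g * k \<and> g * k \<le> g"
  by (metis mult.commute mult_left_le mult_right_mono)

lemma doeblin:
  assumes g: "good \<mu>" and am: "a \<in> borel_measurable M" and bm: "b \<in> borel_measurable M"
    and ab: "\<And>u. u \<in> space M \<Longrightarrow> 0 \<le> a u \<and> a u \<le> 1 \<and> cb \<le> b u \<and> b u \<le> 1"
    and cb: "0 < cb"
    and mM: "\<And>u. u \<in> space M \<Longrightarrow> m * b u \<le> a u \<and> a u \<le> Mx * b u"
    and m0: "0 \<le> m" and M1: "Mx \<le> 1"
    and c0: "c0 = (\<integral>u. a u \<partial>\<mu> j) / (\<integral>u. b u \<partial>\<mu> j)"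
    and v: "v \<in> space M"
  shows "m \<le> c0 \<and> c0 \<le> Mx \<and>
    (m + \<nu> j * (c0 - m)) * (\<integral>u. b u * K j y u v \<partial>\<mu> j) \<le> (\<integral>u. a u * K j y u v \<partial>\<mu> j) \<and>
    (\<integral>u. a u * K j y u v \<partial>\<mu> j) \<le> (Mx - \<nu> j * (Mx - c0)) * (\<integral>u. b u * K j y u v \<partial>\<mu> j)"
proof -
  let ?N = "\<mu> j"
  note N = good_prob[OF g, of j] good_sets[OF g, of j]
  define SA where "SA = (\<integral>u. a u \<partial>?N)"
  define SB where "SB = (\<integral>u. b u \<partial>?N)"
  define A' where "A' = (\<integral>u. a u * K j y u v \<partial>?N)"
  define B' where "B' = (\<integral>u. b u * K j y u v \<partial>?N)"
  have Km: "(\<lambda>u. K j y u v) \<in> borel_measurable M" using Kmeas1[OF v] .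
  have Kb: "u \<in> space M \<Longrightarrow> 0 \<le> K j y u v \<and> K j y u v \<le> 1 \<and> \<nu> j \<le> K j y u v" for u
    using H2[OF _ v, of u j y] \<nu>pos[of j] by auto
  have \<nu>0: "0 \<le> \<nu> j" using \<nu>pos[of j] by simp
  have Ia: "integrable ?N a" by (rule integ[OF N am, of 1]) (use ab in force)
  have Ib: "integrable ?N b" by (rule integ[OF N bm, of 1]) (use ab cb in force)
  have IaK: "integrable ?N (\<lambda>u. a u * K j y u v)"
    by (rule integ[OF N _, of _ 1]) (use am Km in measurable, use ab Kb in \<open>auto simp: abs_mult intro: mult_le_one\<close>)
  have IbK: "integrable ?N (\<lambda>u. b u * K j y u v)"
  proof (rule integ[OF N _, of _ 1])
    show "(\<lambda>u. b u * K j y u v) \<in> borel_measurable M" using bm Km by measurable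
    fix w assume w: "w \<in> space M"
    have "0 \<le> b w" using ab[OF w] cb by linarith
    thus "\<bar>b w * K j y w v\<bar> \<le> 1" using ab[OF w] Kb[OF w] by (simp add: abs_mult mult_le_one)
  qed
  have sp: "space ?N = space M" using good_space[OF g] .
  have SBpos: "cb \<le> SB" unfolding SB_def using ab by (intro conjunct1[OF int_ge_le[OF N bm]]) force
  have "(\<integral>u. m * b u \<partial>?N) \<le> SA" unfolding SA_def
    by (rule integral_mono) (use Ib Ia mM sp in auto)
  hence mSB: "m * SB \<le> SA" unfolding SB_def by simp
  have "SA \<le> (\<integral>u. Mx * b u \<partial>?N)" unfolding SA_def
    by (rule integral_mono) (use Ib Ia mM sp in auto)
  hence MSB: "SA \<le> Mx * SB" unfolding SB_def by simp
  have SAe: "SA = c0 * SB" using c0 SBpos cb unfolding SA_def SB_def by simp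
  have mc: "m \<le> c0" using mSB SAe SBpos cb by (metis mult_right_le_imp_le order_less_le_trans)
  have cM: "c0 \<le> Mx" using MSB SAe SBpos cb by (metis mult_right_le_imp_le order_less_le_trans)
  have B'SB: "B' \<le> SB" unfolding B'_def SB_def
  proof (rule conjunct2[OF int_bounds[OF N bm _ _ \<nu>0]])
    show "(\<lambda>u. b u * K j y u v) \<in> borel_measurable M" using bm Km by measurable
    fix u assume u: "u \<in> space M"
    have b0: "0 \<le> b u" using ab[OF u] cb by linarith
    have "\<nu> j * b u \<le> K j y u v * b u" using Kb[OF u] b0 by (intro mult_right_mono) auto
    moreover have "b u * K j y u v \<le> b u * 1" using Kb[OF u] b0 by (intro mult_left_mono) auto
    ultimately show "\<nu> j * b u \<le> b u * K j y u v \<and> b u * K j y u v \<le> b u \<and> 0 \<le> b u \<and> b u \<le> 1"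
      using b0 ab[OF u] by (simp add: mult.commute)
  qed
  have gm: "(\<lambda>u. a u - m * b u) \<in> borel_measurable M" using am bm by measurable
  have "\<nu> j * (\<integral>u. a u - m * b u \<partial>?N) \<le> (\<integral>u. (a u - m * b u) * K j y u v \<partial>?N)"
  proof (rule conjunct1[OF int_bounds[OF N gm _ _ \<nu>0]])
    show "(\<lambda>u. (a u - m * b u) * K j y u v) \<in> borel_measurable M" using gm Km by measurable
    fix u assume u: "u \<in> space M"
    have "0 \<le> m * b u" using m0 ab[OF u] cb by simp
    then show "\<nu> j * (a u - m * b u) \<le> (a u - m * b u) * K j y u v \<and>
         (a u - m * b u) * K j y u v \<le> a u - m * b u \<and> 0 \<le> a u - m * b u \<and> a u - m * b u \<le> 1"
      using mM[OF u] ab[OF u] Kb[OF u] aux_mult[of "a u - m * b u" "\<nu> j" "K j y u v"] by auto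
  qed
  also have "(\<integral>u. (a u - m * b u) * K j y u v \<partial>?N) = A' - m * B'"
    unfolding A'_def B'_def using IaK IbK by (simp add: left_diff_distrib mult.assoc)
  finally have L1: "\<nu> j * (SA - m * SB) \<le> A' - m * B'"
    unfolding SA_def SB_def using Ia Ib by simp
  have "\<nu> j * (c0 - m) * B' \<le> \<nu> j * (c0 - m) * SB"
    using B'SB mc \<nu>0 by (intro mult_left_mono) auto
  hence low: "(m + \<nu> j * (c0 - m)) * B' \<le> A'" using L1 SAe by (simp add: algebra_simps)
  have hm: "(\<lambda>u. Mx * b u - a u) \<in> borel_measurable M" using am bm by measurable
  have "\<nu> j * (\<integral>u. Mx * b u - a u \<partial>?N) \<le> (\<integral>u. (Mx * b u - a u) * K j y u v \<partial>?N)"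
  proof (rule conjunct1[OF int_bounds[OF N hm _ _ \<nu>0]])
    show "(\<lambda>u. (Mx * b u - a u) * K j y u v) \<in> borel_measurable M" using hm Km by measurable
    fix u assume u: "u \<in> space M"
    have "Mx * b u \<le> 1"
      using M1 ab[OF u] cb by (metis dual_order.trans less_le_not_le mult_le_one not_le)
    then show "\<nu> j * (Mx * b u - a u) \<le> (Mx * b u - a u) * K j y u v \<and>
         (Mx * b u - a u) * K j y u v \<le> Mx * b u - a u \<and> 0 \<le> Mx * b u - a u \<and> Mx * b u - a u \<le> 1"
      using mM[OF u] ab[OF u] Kb[OF u] aux_mult[of "Mx * b u - a u" "\<nu> j" "K j y u v"] by auto
  qed
  also have "(\<integral>u. (Mx * b u - a u) * K j y u v \<partial>?N) = Mx * B' - A'"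
    unfolding A'_def B'_def using IaK IbK by (simp add: left_diff_distrib mult.assoc)
  finally have L2: "\<nu> j * (Mx * SB - SA) \<le> Mx * B' - A'"
    unfolding SA_def SB_def using Ia Ib by simp
  have "\<nu> j * (Mx - c0) * B' \<le> \<nu> j * (Mx - c0) * SB"
    using B'SB cM \<nu>0 by (intro mult_left_mono) auto
  hence up: "A' \<le> (Mx - \<nu> j * (Mx - c0)) * B'" using L2 SAe by (simp add: algebra_simps)
  show ?thesis using mc cM low up unfolding A'_def B'_def by simp
qed


lemma prod_step: "q + 1 \<le> (j::int) \<Longrightarrow> (\<Prod>k\<in>{q+1..j+1-1}. f k) = f j * (\<Prod>k\<in>{q+1..j-1}. (f k :: real))"
proof -
  assume j: "q + 1 \<le> j"
  have "{q+1..j+1-1} = insert j {q+1..j-1}" using j by auto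
  thus ?thesis by simp
qed

lemma forget:
  assumes g: "good \<mu>" and j: "q + 1 \<le> j"
  shows "\<exists>m Mx. \<nu> q \<le> m \<and> m \<le> Mx \<and> Mx \<le> 1 \<and> Mx - m \<le> (\<Prod>k\<in>{q+1..j-1}. 1 - \<nu> k) \<and>
     (\<forall>v\<in>space M. m * alpha (q+1) \<mu> j v \<le> alpha q \<mu> j v \<and> alpha q \<mu> j v \<le> Mx * alpha (q+1) \<mu> j v)"
  using j
proof (induction j rule: int_ge_induct)
  case base
  have a1: "alpha (q+1) \<mu> (q+1) v = 1" for v by (simp add: alpha.simps)
  have a0: "alpha q \<mu> (q+1) v = (\<integral>u. K q (x q) u v \<partial>\<mu> q)" for v
    by (simp add: alpha.simps)
  have P: "\<forall>v\<in>space M. \<nu> q * alpha (q+1) \<mu> (q+1) v \<le> alpha q \<mu> (q+1) v \<and> alpha q \<mu> (q+1) v \<le> 1 * alpha (q+1) \<mu> (q+1) v"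
  proof
    fix v assume v: "v \<in> space M"
    have "\<nu> q \<le> (\<integral>u. K q (x q) u v \<partial>\<mu> q) \<and> (\<integral>u. K q (x q) u v \<partial>\<mu> q) \<le> 1"
      by (rule int_ge_le[OF good_prob[OF g] good_sets[OF g] Kmeas1[OF v]]) (use H2 v in auto)
    thus "\<nu> q * alpha (q+1) \<mu> (q+1) v \<le> alpha q \<mu> (q+1) v \<and> alpha q \<mu> (q+1) v \<le> 1 * alpha (q+1) \<mu> (q+1) v"
      unfolding a1 a0 by auto
  qed
  have Q: "1 - \<nu> q \<le> (\<Prod>k\<in>{q+1..q+1-1}. 1 - \<nu> k)" using \<nu>pos[of q] by simp
  show ?case by (rule exI[of _ "\<nu> q"], rule exI[of _ 1]) (use P Q \<nu>le1[OF g] in auto)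
next
  case (step j)
  then obtain m Mx where mM: "\<nu> q \<le> m" "m \<le> Mx" "Mx \<le> 1" "Mx - m \<le> (\<Prod>k\<in>{q+1..j-1}. 1 - \<nu> k)"
    "\<forall>v\<in>space M. m * alpha (q+1) \<mu> j v \<le> alpha q \<mu> j v \<and> alpha q \<mu> j v \<le> Mx * alpha (q+1) \<mu> j v"
    by blast
  obtain ca where ca: "\<forall>v\<in>space M. ca \<le> alpha q \<mu> j v \<and> alpha q \<mu> j v \<le> 1" "ca > 0"
    using alpha_pos[OF g] by blast
  obtain cb where cb: "\<forall>v\<in>space M. cb \<le> alpha (q+1) \<mu> j v \<and> alpha (q+1) \<mu> j v \<le> 1" "cb > 0"
    using alpha_pos[OF g] by blast
  define c0 where "c0 = (\<integral>u. alpha q \<mu> j u \<partial>\<mu> j) / (\<integral>u. alpha (q+1) \<mu> j u \<partial>\<mu> j)"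
  have ea: "alpha s \<mu> (j+1) v = (\<integral>u. alpha s \<mu> j u * K j (x j) u v \<partial>\<mu> j)" if "s \<le> j" for s v
    using that by (subst alpha.simps) simp
  have m0: "0 \<le> m" using mM(1) \<nu>pos[of q] by linarith
  have D: "m \<le> c0 \<and> c0 \<le> Mx \<and>
    (m + \<nu> j * (c0 - m)) * (\<integral>u. alpha (q+1) \<mu> j u * K j (x j) u v \<partial>\<mu> j) \<le> (\<integral>u. alpha q \<mu> j u * K j (x j) u v \<partial>\<mu> j) \<and>
    (\<integral>u. alpha q \<mu> j u * K j (x j) u v \<partial>\<mu> j) \<le> (Mx - \<nu> j * (Mx - c0)) * (\<integral>u. alpha (q+1) \<mu> j u * K j (x j) u v \<partial>\<mu> j)"
    if v: "v \<in> space M" for v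
    by (rule doeblin[OF g alpha_meas[OF g] alpha_meas[OF g] _ cb(2) _ m0 mM(3) c0_def v])
       (use ca cb mM(5) in force)+
  have ne: "space M \<noteq> {}" using good_ne[OF g] .
  then obtain v0 where "v0 \<in> space M" by blast
  hence mc: "m \<le> c0" and cM: "c0 \<le> Mx" using D by blast+
  have \<nu>j: "0 < \<nu> j" "\<nu> j \<le> 1" using \<nu>pos[of j] \<nu>le1[OF g] by auto
  show ?case
  proof (rule exI[of _ "m + \<nu> j * (c0 - m)"], rule exI[of _ "Mx - \<nu> j * (Mx - c0)"], intro conjI ballI)
    show "\<nu> q \<le> m + \<nu> j * (c0 - m)" using mM(1) mc \<nu>j by (simp add: add_increasing2)
    have "\<nu> j * (c0 - m) \<le> c0 - m" using \<nu>j mc by (simp add: mult_left_le_one_le)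
    moreover have "\<nu> j * (Mx - c0) \<le> Mx - c0" using \<nu>j cM by (simp add: mult_left_le_one_le)
    ultimately show "m + \<nu> j * (c0 - m) \<le> Mx - \<nu> j * (Mx - c0)" by linarith
    show "Mx - \<nu> j * (Mx - c0) \<le> 1" using mM(3) cM \<nu>j by (smt (verit) mult_nonneg_nonneg)
    have "Mx - \<nu> j * (Mx - c0) - (m + \<nu> j * (c0 - m)) = (1 - \<nu> j) * (Mx - m)" by (simp add: algebra_simps)
    also have "\<dots> \<le> (1 - \<nu> j) * (\<Prod>k\<in>{q+1..j-1}. 1 - \<nu> k)" using mM(4) \<nu>j by (intro mult_left_mono) auto
    also have "\<dots> = (\<Prod>k\<in>{q+1..j+1-1}. 1 - \<nu> k)" using prod_step[OF step(1)] by simp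
    finally show "Mx - \<nu> j * (Mx - c0) - (m + \<nu> j * (c0 - m)) \<le> (\<Prod>k\<in>{q+1..j+1-1}. 1 - \<nu> k)" .
    fix v assume v: "v \<in> space M"
    show "(m + \<nu> j * (c0 - m)) * alpha (q+1) \<mu> (j+1) v \<le> alpha q \<mu> (j+1) v"
         "alpha q \<mu> (j+1) v \<le> (Mx - \<nu> j * (Mx - c0)) * alpha (q+1) \<mu> (j+1) v"
      using D[OF v] ea[of q v] ea[of "q+1" v] step(1) by auto
  qed
qed


lemma Kpi:
  assumes \<pi>: "sets \<pi> = sets M" and i: "i \<in> I" "i + 1 \<in> I"
  shows "(\<lambda>v. K i y (v i) (v (i+1))) \<in> borel_measurable (PiM I (\<lambda>_. \<pi>))"
proof -
  have c: "(\<lambda>v. v j) \<in> measurable (PiM I (\<lambda>_. \<pi>)) M" if "j \<in> I" for j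
    using measurable_component_singleton[OF that, of "\<lambda>_. \<pi>"] measurable_cong_sets[OF refl \<pi>] by blast
  have "(\<lambda>v. (v i, v (i+1))) \<in> measurable (PiM I (\<lambda>_. \<pi>)) (M \<Otimes>\<^sub>M M)"
    using c i by (intro measurable_Pair) auto
  from measurable_comp[OF this Kmeas[of i y]] show ?thesis by (simp add: comp_def)
qed

lemma obs_beta:
  assumes \<pi>: "prob_space \<pi>" "sets \<pi> = sets M" and a: "1 \<le> a" "a \<le> n + 1"
  shows "obs_prob \<pi> K n a x = (\<integral>v. beta (\<lambda>_. \<pi>) a v \<partial>\<pi>)"
proof -
  interpret P: prob_space \<pi> by fact
  interpret PS: product_sigma_finite "\<lambda>_::int. \<pi>" by unfold_locales
  let ?\<mu> = "\<lambda>_::int. \<pi>"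
  have g: "good ?\<mu>" unfolding good_def using \<pi> by simp
  let ?P = "\<lambda>m. PiM {1..m} ?\<mu>"
  let ?F = "\<lambda>m v. (\<Prod>i\<in>{a..m-1}. K i (x i) (v i) (v (i+1))) * beta ?\<mu> m (v m)"
  have spP: "v \<in> space (?P m) \<Longrightarrow> i \<in> {1..m} \<Longrightarrow> v i \<in> space M" for v m i
    using good_space[OF g] by (auto simp: space_PiM)
  have Fm: "?F m \<in> borel_measurable (?P m)" if "a \<le> m" for m
  proof -
    have mm: "m \<in> {1..m}" using that a by auto
    have "(\<lambda>v. v m) \<in> measurable (?P m) M"
      using measurable_component_singleton[OF mm, of ?\<mu>] measurable_cong_sets[OF refl \<pi>(2)] by blast
    hence b: "(\<lambda>v. beta ?\<mu> m (v m)) \<in> borel_measurable (?P m)"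
      using measurable_comp[OF _ beta_meas[OF g]] by (simp add: comp_def)
    have "(\<lambda>v. \<Prod>i\<in>{a..m-1}. K i (x i) (v i) (v (i+1))) \<in> borel_measurable (?P m)"
      using a by (intro borel_measurable_prod Kpi[OF \<pi>(2)]) auto
    thus ?thesis using b by measurable
  qed
  have Fb: "0 \<le> ?F m v \<and> ?F m v \<le> 1" if "v \<in> space (?P m)" "a \<le> m" for m v
  proof -
    have "0 \<le> K i (x i) (v i) (v (i+1)) \<and> K i (x i) (v i) (v (i+1)) \<le> 1" if i: "i \<in> {a..m-1}" for i
    proof -
      have "i \<in> {1..m}" "i + 1 \<in> {1..m}" using i a by auto
      hence "v i \<in> space M" "v (i+1) \<in> space M" using spP[OF \<open>v \<in> space (?P m)\<close>] by blast+
      from H2[OF this, of i "x i"] \<nu>pos[of i] show ?thesis by linarith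
    qed
    hence p: "0 \<le> (\<Prod>i\<in>{a..m-1}. K i (x i) (v i) (v (i+1))) \<and> (\<Prod>i\<in>{a..m-1}. K i (x i) (v i) (v (i+1))) \<le> 1"
      by (auto intro: prod_nonneg prod_le_1)
    obtain c where "c > 0" "\<forall>v\<in>space M. c \<le> beta ?\<mu> m v \<and> beta ?\<mu> m v \<le> 1" using beta_pos[OF g] by blast
    moreover have "v m \<in> space M" using spP[OF that(1), of m] that a by simp
    ultimately have "0 \<le> beta ?\<mu> m (v m) \<and> beta ?\<mu> m (v m) \<le> 1" by force
    thus ?thesis using p by (auto intro: mult_le_one)
  qed
  have IF: "integrable (?P m) (?F m)" if "a \<le> m" for m
  proof -
    interpret PP: prob_space "?P m" by (rule prob_space_PiM) (rule \<pi>(1))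
    show ?thesis by (rule PP.integrable_const_bound[where B=1]) (use Fm Fb that in auto)
  qed
  have main: "m \<le> n + 1 \<longrightarrow> a \<le> m \<longrightarrow> obs_prob \<pi> K n a x = integral\<^sup>L (?P m) (?F m)" if "m \<le> n + 1" for m
    using that
  proof (induction m rule: int_le_induct)
    case base
    show ?case unfolding obs_prob_def by (simp add: beta.simps)
  next
    case (step m)
    show ?case
    proof (intro impI)
      assume am: "a \<le> m - 1"
      have ins: "{1..m} = insert m {1..m-1}" using am a by auto
      have I2: "integrable (PiM (insert m {1..m-1}) ?\<mu>) (?F m)" using IF[of m] am unfolding ins[symmetric] by simp
      have "obs_prob \<pi> K n a x = integral\<^sup>L (?P m) (?F m)" using step am by simp
      also have "integral\<^sup>L (?P m) (?F m) = (\<integral>v. (\<integral>y. ?F m (v(m:=y)) \<partial>\<pi>) \<partial>?P (m-1))"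
        unfolding ins by (rule PS.product_integral_insert[OF _ _ I2]) auto
      also have "\<dots> = integral\<^sup>L (?P (m-1)) (?F (m-1))"
      proof (rule Bochner_Integration.integral_cong[OF refl])
        fix v assume v: "v \<in> space (?P (m-1))"
        have e1: "?F m (v(m:=y)) = (\<Prod>i\<in>{a..m-1-1}. K i (x i) (v i) (v (i+1))) * (K (m-1) (x (m-1)) (v (m-1)) y * beta ?\<mu> m y)" for y
        proof -
          have "{a..m-1} = insert (m-1) {a..m-1-1}" using am by auto
          hence "(\<Prod>i\<in>{a..m-1}. K i (x i) ((v(m:=y)) i) ((v(m:=y)) (i+1)))
              = K (m-1) (x (m-1)) (v (m-1)) y * (\<Prod>i\<in>{a..m-1-1}. K i (x i) ((v(m:=y)) i) ((v(m:=y)) (i+1)))"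
            by simp
          also have "(\<Prod>i\<in>{a..m-1-1}. K i (x i) ((v(m:=y)) i) ((v(m:=y)) (i+1)))
              = (\<Prod>i\<in>{a..m-1-1}. K i (x i) (v i) (v (i+1)))"
            by (rule prod.cong) auto
          finally show ?thesis by simp
        qed
        have "(\<integral>y. ?F m (v(m:=y)) \<partial>\<pi>) = (\<Prod>i\<in>{a..m-1-1}. K i (x i) (v i) (v (i+1))) * beta ?\<mu> (m-1) (v (m-1))"
          unfolding e1 using step(1) am by (subst (2) beta.simps) simp
        thus "(\<integral>y. ?F m (v(m:=y)) \<partial>\<pi>) = ?F (m-1) v" by simp
      qed
      finally show "obs_prob \<pi> K n a x = integral\<^sup>L (?P (m-1)) (?F (m-1))" .
    qed
  qed
  have ins: "{1..a} = insert a {1..a-1}" using a by auto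
  have I2: "integrable (PiM (insert a {1..a-1}) ?\<mu>) (?F a)" using IF[of a] unfolding ins[symmetric] by simp
  have "obs_prob \<pi> K n a x = integral\<^sup>L (?P a) (?F a)" using main[of a] a by simp
  also have "integral\<^sup>L (?P a) (?F a) = (\<integral>v. (\<integral>y. ?F a (v(a:=y)) \<partial>\<pi>) \<partial>?P (a-1))"
    unfolding ins by (rule PS.product_integral_insert[OF _ _ I2]) auto
  also have "\<dots> = (\<integral>v. (\<integral>y. beta ?\<mu> a y \<partial>\<pi>) \<partial>?P (a-1))" by simp
  also have "\<dots> = (\<integral>y. beta ?\<mu> a y \<partial>\<pi>)"
  proof -
    interpret PP: prob_space "?P (a-1)" by (rule prob_space_PiM) (rule \<pi>(1))
    show ?thesis by (simp add: PP.prob_space)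
  qed
  finally show ?thesis .
qed

end


context hmm begin

lemma beta_cong: "(\<And>k. i < k \<Longrightarrow> k \<le> n + 1 \<Longrightarrow> \<mu> k = \<mu>' k) \<Longrightarrow> beta \<mu> i = beta \<mu>' i"
proof (induction \<mu> i arbitrary: \<mu>' rule: beta.induct)
  case (1 \<mu> i)
  show ?case
  proof (cases "n < i")
    case True then show ?thesis by (simp add: beta.simps[of \<mu> i] beta.simps[of \<mu>' i])
  next
    case False
    have "beta \<mu> (i+1) = beta \<mu>' (i+1)" using 1 False by simp
    moreover have "\<mu> (i+1) = \<mu>' (i+1)" using 1(2)[of "i+1"] False by simp
    ultimately show ?thesis using False by (simp add: beta.simps[of \<mu> i] beta.simps[of \<mu>' i])
  qed
qed

lemma alpha_cong: "(\<And>k. k < i \<Longrightarrow> \<mu> k = \<mu>' k) \<Longrightarrow> alpha s \<mu> i = alpha s \<mu>' i"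
proof (induction s \<mu> i arbitrary: \<mu>' rule: alpha.induct)
  case (1 s \<mu> i)
  show ?case
  proof (cases "i \<le> s")
    case True then show ?thesis by (simp add: alpha.simps[of s \<mu> i] alpha.simps[of s \<mu>' i])
  next
    case False
    have "alpha s \<mu> (i-1) = alpha s \<mu>' (i-1)" using 1 False by simp
    moreover have "\<mu> (i-1) = \<mu>' (i-1)" using 1(2)[of "i-1"] False by simp
    ultimately show ?thesis using False by (simp add: alpha.simps[of s \<mu> i] alpha.simps[of s \<mu>' i])
  qed
qed

lemma ratio_rewrite:
  fixes a b t :: "'v \<Rightarrow> real"
  assumes N: "prob_space N" "sets N = sets M"
    and am: "a \<in> borel_measurable M" and bm: "b \<in> borel_measurable M" and tm: "t \<in> borel_measurable M"
    and bd: "\<And>v. v \<in> space M \<Longrightarrow> \<bar>a v\<bar> \<le> 1 \<and> \<bar>b v\<bar> \<le> 1 \<and> \<bar>t v\<bar> \<le> 1"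
    and C: "0 < (\<integral>v. b v * t v \<partial>N)"
  shows "(\<integral>v. a v * t v \<partial>N) / (\<integral>v. b v * t v \<partial>N)
       = m + (\<integral>v. (a v - m * b v) * t v \<partial>N) / (\<integral>v. b v * t v \<partial>N)"
proof -
  have i1: "integrable N (\<lambda>v. a v * t v)"
  proof (rule integ0[OF N, where B=1])
    show "(\<lambda>v. a v * t v) \<in> borel_measurable M" using am tm by measurable
    fix w assume "w \<in> space M"
    thus "\<bar>a w * t w\<bar> \<le> 1" using bd by (auto simp: abs_mult intro: mult_le_one)
  qed
  have i2: "integrable N (\<lambda>v. b v * t v)"
  proof (rule integ0[OF N, where B=1])
    show "(\<lambda>v. b v * t v) \<in> borel_measurable M" using bm tm by measurable
    fix w assume "w \<in> space M"
    thus "\<bar>b w * t w\<bar> \<le> 1" using bd by (auto simp: abs_mult intro: mult_le_one)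
  qed
  have "(\<integral>v. (a v - m * b v) * t v \<partial>N) = (\<integral>v. a v * t v - m * (b v * t v) \<partial>N)"
    by (simp add: algebra_simps)
  also have "\<dots> = (\<integral>v. a v * t v \<partial>N) - m * (\<integral>v. b v * t v \<partial>N)"
    using i1 i2 by simp
  finally show ?thesis using C by (simp add: field_simps)
qed


lemma step_mid:
  assumes g: "good \<mu>" and g': "good \<mu>'" and j: "q + 1 \<le> j" "j \<le> n + 1"
    and eq: "\<And>i. i \<noteq> j \<Longrightarrow> \<mu>' i = \<mu> i"
  shows "\<bar>ln ((\<integral>v. beta \<mu> q v \<partial>\<mu> q) / (\<integral>v. beta \<mu> (q+1) v \<partial>\<mu> (q+1)))
         - ln ((\<integral>v. beta \<mu>' q v \<partial>\<mu>' q) / (\<integral>v. beta \<mu>' (q+1) v \<partial>\<mu>' (q+1)))\<bar>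
     \<le> 2 * (1 / (\<nu> q * \<nu> (j-1) * \<nu> j) * (\<Prod>k\<in>{q+1..j-1}. 1 - \<nu> k)) * tv_norm M (\<mu> j) (\<mu>' j)"
proof -
  define a where "a = alpha q \<mu> j"
  define b where "b = alpha (q+1) \<mu> j"
  define t where "t = beta \<mu> j"
  define D where "D = (\<Prod>k\<in>{q+1..j-1}. 1 - \<nu> k)"
  have ha: "alpha q \<mu>' j = a" unfolding a_def by (rule alpha_cong) (use eq in auto)
  have hb: "alpha (q+1) \<mu>' j = b" unfolding b_def by (rule alpha_cong) (use eq in auto)
  have ht: "beta \<mu>' j = t" unfolding t_def by (rule beta_cong) (use eq in auto)
  have fA: "(\<integral>v. beta \<mu> q v \<partial>\<mu> q) = (\<integral>v. a v * t v \<partial>\<mu> j)"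
    unfolding a_def t_def using fwd[OF g, of q j] j by simp
  have fB: "(\<integral>v. beta \<mu> (q+1) v \<partial>\<mu> (q+1)) = (\<integral>v. b v * t v \<partial>\<mu> j)"
    unfolding b_def t_def using fwd[OF g, of "q+1" j] j by simp
  have fA': "(\<integral>v. beta \<mu>' q v \<partial>\<mu>' q) = (\<integral>v. a v * t v \<partial>\<mu>' j)"
    using fwd[OF g', of q j] j ha ht by simp
  have fB': "(\<integral>v. beta \<mu>' (q+1) v \<partial>\<mu>' (q+1)) = (\<integral>v. b v * t v \<partial>\<mu>' j)"
    using fwd[OF g', of "q+1" j] j hb ht by simp
  obtain m Mx where mM: "\<nu> q \<le> m" "m \<le> Mx" "Mx \<le> 1" "Mx - m \<le> D"
    "\<forall>v\<in>space M. m * b v \<le> a v \<and> a v \<le> Mx * b v"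
    using forget[OF g j(1)] unfolding a_def b_def D_def by blast
  have am: "a \<in> borel_measurable M" "b \<in> borel_measurable M" "t \<in> borel_measurable M"
    unfolding a_def b_def t_def using alpha_meas[OF g] beta_meas[OF g] by auto
  obtain ca where ca: "\<forall>v\<in>space M. ca \<le> a v \<and> a v \<le> 1" "ca > 0"
    using alpha_pos[OF g] unfolding a_def by blast
  have \<nu>01: "0 < \<nu> i" "\<nu> i \<le> 1" for i using \<nu>pos \<nu>le1[OF g] by auto
  obtain Sb where Sb: "Sb > 0" "\<forall>v\<in>space M. \<nu> (j-1) * Sb \<le> b v \<and> b v \<le> Sb"
  proof (cases "j = q + 1")
    case True
    hence "b = (\<lambda>_. 1)" unfolding b_def by (simp add: alpha.simps)
    thus ?thesis using that[of 1] \<nu>01 by auto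
  next
    case False
    obtain cb where cb: "\<forall>v\<in>space M. cb \<le> alpha (q+1) \<mu> (j-1) v \<and> alpha (q+1) \<mu> (j-1) v \<le> 1" "cb > 0"
      using alpha_pos[OF g] by blast
    have I1: "cb \<le> (\<integral>w. alpha (q+1) \<mu> (j-1) w \<partial>\<mu> (j-1))"
      using int_ge_le[OF good_prob[OF g, of "j-1"] good_sets[OF g, of "j-1"] alpha_meas[OF g, where s="q+1" and i="j-1"], of cb 1] cb by blast
    have I2: "\<forall>v\<in>space M. \<nu> (j-1) * (\<integral>w. alpha (q+1) \<mu> (j-1) w \<partial>\<mu> (j-1)) \<le> b v \<and>
        b v \<le> (\<integral>w. alpha (q+1) \<mu> (j-1) w \<partial>\<mu> (j-1))"
      unfolding b_def using alpha_step[OF g _ _ , of "q+1" j] False j cb by force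
    show ?thesis by (rule that[of "\<integral>w. alpha (q+1) \<mu> (j-1) w \<partial>\<mu> (j-1)"]) (use I1 I2 cb(2) in auto)
  qed
  obtain Tb where Tb: "Tb > 0" "\<forall>v\<in>space M. \<nu> j * Tb \<le> t v \<and> t v \<le> Tb"
  proof (cases "j = n + 1")
    case True
    hence "t = (\<lambda>_. 1)" unfolding t_def by (simp add: beta.simps)
    thus ?thesis using that[of 1] \<nu>01 by auto
  next
    case False
    obtain cb where cb: "\<forall>v\<in>space M. cb \<le> beta \<mu> (j+1) v \<and> beta \<mu> (j+1) v \<le> 1" "cb > 0"
      using beta_pos[OF g] by blast
    have I1: "cb \<le> (\<integral>w. beta \<mu> (j+1) w \<partial>\<mu> (j+1))"
      using int_ge_le[OF good_prob[OF g, of "j+1"] good_sets[OF g, of "j+1"] beta_meas[OF g, where i="j+1"], of cb 1] cb by blast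
    have I2: "\<forall>v\<in>space M. \<nu> j * (\<integral>w. beta \<mu> (j+1) w \<partial>\<mu> (j+1)) \<le> t v \<and>
        t v \<le> (\<integral>w. beta \<mu> (j+1) w \<partial>\<mu> (j+1))"
      unfolding t_def using beta_step[OF g _ _ , of j] False j cb by force
    show ?thesis by (rule that[of "\<integral>w. beta \<mu> (j+1) w \<partial>\<mu> (j+1)"]) (use I1 I2 cb(2) in auto)
  qed
  have D0: "0 \<le> D" unfolding D_def using \<nu>01 by (intro prod_nonneg) (auto simp: algebra_simps)
  define c where "c = (\<lambda>v. b v * t v)"
  define e where "e = (\<lambda>v. (a v - m * b v) * t v)"
  have cb: "\<nu> (j-1) * \<nu> j * (Sb * Tb) \<le> c v \<and> c v \<le> Sb * Tb \<and> 0 \<le> e v \<and> e v \<le> D * c v"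
    if v: "v \<in> space M" for v
  proof -
    have b1: "\<nu> (j-1) * Sb \<le> b v" "b v \<le> Sb" and t1: "\<nu> j * Tb \<le> t v" "t v \<le> Tb"
      using Sb(2) Tb(2) v by auto
    have p1: "0 \<le> \<nu> (j-1) * Sb" "0 \<le> \<nu> j * Tb" using \<nu>01(1)[of "j-1"] \<nu>01(1)[of j] Sb(1) Tb(1) by auto
    have X1: "(\<nu> (j-1) * Sb) * (\<nu> j * Tb) \<le> b v * t v" using b1 t1 p1 by (intro mult_mono) auto
    have X2: "b v * t v \<le> Sb * Tb" using b1 t1 p1 by (intro mult_mono) auto
    have X3: "0 \<le> a v - m * b v" using mM(5) v by auto
    have "a v - m * b v \<le> (Mx - m) * b v" using mM(5) v by (auto simp: algebra_simps)
    also have "\<dots> \<le> D * b v" using mM(4) b1 p1 by (intro mult_right_mono) auto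
    finally have X4: "a v - m * b v \<le> D * b v" .
    have t0: "0 \<le> t v" using t1 p1 by linarith
    have "\<nu> (j-1) * \<nu> j * (Sb * Tb) \<le> c v" using X1 unfolding c_def by (simp add: mult_ac)
    moreover have "c v \<le> Sb * Tb" using X2 unfolding c_def .
    moreover have "0 \<le> e v" unfolding e_def using X3 t0 by simp
    moreover have "e v \<le> D * c v" unfolding e_def c_def using mult_right_mono[OF X4 t0] by (simp add: mult_ac)
    ultimately show ?thesis by simp
  qed
  have bd: "\<bar>a v\<bar> \<le> 1 \<and> \<bar>b v\<bar> \<le> 1 \<and> \<bar>t v\<bar> \<le> 1" if v: "v \<in> space M" for v
  proof -
    obtain cb' where "\<forall>v\<in>space M. cb' \<le> b v \<and> b v \<le> 1" "cb' > 0"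
      using alpha_pos[OF g] unfolding b_def by blast
    moreover obtain ct where "\<forall>v\<in>space M. ct \<le> t v \<and> t v \<le> 1" "ct > 0"
      using beta_pos[OF g] unfolding t_def by blast
    ultimately show ?thesis using ca v by force
  qed
  have Cpos: "0 < (\<integral>v. b v * t v \<partial>N)" if N: "prob_space N" "sets N = sets M" for N
  proof -
    have "\<nu> (j-1) * \<nu> j * (Sb * Tb) \<le> (\<integral>v. c v \<partial>N)"
    proof (rule conjunct1[OF int_ge_le[OF N]])
      show "c \<in> borel_measurable M" unfolding c_def using am by measurable
      fix w assume "w \<in> space M"
      thus "\<nu> (j-1) * \<nu> j * (Sb * Tb) \<le> c w \<and> c w \<le> Sb * Tb" using cb by blast
    qed
    moreover have "0 < \<nu> (j-1) * \<nu> j * (Sb * Tb)" using \<nu>01 Sb Tb by simp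
    ultimately show ?thesis unfolding c_def by linarith
  qed
  have N1: "prob_space (\<mu> j)" "sets (\<mu> j) = sets M" using good_prob[OF g] good_sets[OF g] by auto
  have N2: "prob_space (\<mu>' j)" "sets (\<mu>' j) = sets M" using good_prob[OF g'] good_sets[OF g'] by auto
  have r1: "(\<integral>v. a v * t v \<partial>\<mu> j) / (\<integral>v. b v * t v \<partial>\<mu> j) = m + (\<integral>v. e v \<partial>\<mu> j) / (\<integral>v. c v \<partial>\<mu> j)"
    unfolding e_def c_def by (rule ratio_rewrite[OF N1 am bd Cpos[OF N1]])
  have r2: "(\<integral>v. a v * t v \<partial>\<mu>' j) / (\<integral>v. b v * t v \<partial>\<mu>' j) = m + (\<integral>v. e v \<partial>\<mu>' j) / (\<integral>v. c v \<partial>\<mu>' j)"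
    unfolding e_def c_def by (rule ratio_rewrite[OF N2 am bd Cpos[OF N2]])
  have cm: "c \<in> borel_measurable M" "e \<in> borel_measurable M" unfolding c_def e_def using am by measurable
  have "\<bar>ln (m + (\<integral>v. e v \<partial>\<mu> j) / (\<integral>v. c v \<partial>\<mu> j)) - ln (m + (\<integral>v. e v \<partial>\<mu>' j) / (\<integral>v. c v \<partial>\<mu>' j))\<bar>
    \<le> 2 * D * tv_norm M (\<mu> j) (\<mu>' j) / (\<nu> q * (\<nu> (j-1) * \<nu> j))"
    by (rule ratio_abs[OF N1 N2 cm, where P="Sb * Tb"])
       (use Sb Tb \<nu>01 D0 mM(1) cb in auto)
  also have "\<dots> = 2 * (1 / (\<nu> q * \<nu> (j-1) * \<nu> j) * D) * tv_norm M (\<mu> j) (\<mu>' j)"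
    by (simp add: field_simps)
  finally show ?thesis unfolding fA fB fA' fB' r1 r2 D_def .
qed


lemma step_q:
  assumes g: "good \<mu>" and g': "good \<mu>'" and q: "q \<le> n"
    and eq: "\<And>i. i \<noteq> q \<Longrightarrow> \<mu>' i = \<mu> i"
  shows "\<bar>ln ((\<integral>v. beta \<mu> q v \<partial>\<mu> q) / (\<integral>v. beta \<mu> (q+1) v \<partial>\<mu> (q+1)))
         - ln ((\<integral>v. beta \<mu>' q v \<partial>\<mu>' q) / (\<integral>v. beta \<mu>' (q+1) v \<partial>\<mu>' (q+1)))\<bar>
     \<le> 2 * (1 / (\<nu> q * \<nu> (q+0-1) * \<nu> (q+0)) * (\<Prod>k\<in>{q+1..q+0-1}. 1 - \<nu> k)) * tv_norm M (\<mu> q) (\<mu>' q)"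
proof -
  define t where "t = beta \<mu> q"
  have ht: "beta \<mu>' q = t" unfolding t_def by (rule beta_cong) (use eq in auto)
  have hB: "(\<integral>v. beta \<mu>' (q+1) v \<partial>\<mu>' (q+1)) = (\<integral>v. beta \<mu> (q+1) v \<partial>\<mu> (q+1))"
  proof -
    have "beta \<mu>' (q+1) = beta \<mu> (q+1)" by (rule beta_cong) (use eq in auto)
    moreover have "\<mu>' (q+1) = \<mu> (q+1)" using eq by simp
    ultimately show ?thesis by simp
  qed
  define T where "T = (\<integral>v. beta \<mu> (q+1) v \<partial>\<mu> (q+1))"
  obtain cb where cb: "\<forall>v\<in>space M. cb \<le> beta \<mu> (q+1) v \<and> beta \<mu> (q+1) v \<le> 1" "cb > 0"
    using beta_pos[OF g] by blast
  have T0: "cb \<le> T" unfolding T_def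
    using int_ge_le[OF good_prob[OF g, of "q+1"] good_sets[OF g, of "q+1"] beta_meas[OF g, where i="q+1"], of cb 1] cb by blast
  have tb: "\<forall>v\<in>space M. \<nu> q * T \<le> t v \<and> t v \<le> T"
    unfolding t_def T_def using beta_step[OF g q] cb by force
  have \<nu>01: "0 < \<nu> i" "\<nu> i \<le> 1" for i using \<nu>pos \<nu>le1[OF g] by auto
  have Tp: "0 < T" using T0 cb by simp
  have tm: "t \<in> borel_measurable M" unfolding t_def by (rule beta_meas[OF g])
  have N1: "prob_space (\<mu> q)" "sets (\<mu> q) = sets M" using good_prob[OF g] good_sets[OF g] by auto
  have N2: "prob_space (\<mu>' q)" "sets (\<mu>' q) = sets M" using good_prob[OF g'] good_sets[OF g'] by auto
  have A1: "\<nu> q * T \<le> (\<integral>v. t v \<partial>\<mu> q)" using int_ge_le[OF N1 tm, of "\<nu> q * T" T] tb by blast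
  have A2: "\<nu> q * T \<le> (\<integral>v. t v \<partial>\<mu>' q)" using int_ge_le[OF N2 tm, of "\<nu> q * T" T] tb by blast
  note tvb = tv_basic[OF N1 N2]
  have tv0: "0 \<le> tv_norm M (\<mu> q) (\<mu>' q)" using tvb by simp
  have dA: "\<bar>(\<integral>v. t v \<partial>\<mu> q) - (\<integral>v. t v \<partial>\<mu>' q)\<bar> \<le> T * tv_norm M (\<mu> q) (\<mu>' q)"
  proof -
    have "\<forall>v\<in>space M. \<bar>t v\<bar> \<le> T" using tb \<nu>01 Tp by (smt (verit) mult_pos_pos)
    thus ?thesis using tvb tm by blast
  qed
  have L: "0 < \<nu> q * T" using \<nu>01 Tp by simp
  have "ln ((\<integral>v. t v \<partial>\<mu> q) / T) - ln ((\<integral>v. t v \<partial>\<mu>' q) / T) = ln (\<integral>v. t v \<partial>\<mu> q) - ln (\<integral>v. t v \<partial>\<mu>' q)"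
    using A1 A2 L Tp by (simp add: ln_div)
  hence "\<bar>ln ((\<integral>v. t v \<partial>\<mu> q) / T) - ln ((\<integral>v. t v \<partial>\<mu>' q) / T)\<bar>
      \<le> \<bar>(\<integral>v. t v \<partial>\<mu> q) - (\<integral>v. t v \<partial>\<mu>' q)\<bar> / (\<nu> q * T)"
    using ln_bound[OF L A1 A2] by simp
  also have "\<dots> \<le> T * tv_norm M (\<mu> q) (\<mu>' q) / (\<nu> q * T)" using dA L by (intro divide_right_mono) auto
  also have "\<dots> = tv_norm M (\<mu> q) (\<mu>' q) / \<nu> q" using Tp by simp
  also have "\<dots> \<le> 2 * (1 / (\<nu> q * \<nu> (q+0-1) * \<nu> (q+0)) * (\<Prod>k\<in>{q+1..q+0-1}. 1 - \<nu> k)) * tv_norm M (\<mu> q) (\<mu>' q)"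
  proof -
    have p: "\<nu> (q-1) * \<nu> q \<le> 1" using \<nu>01 by (simp add: mult_le_one less_imp_le)
    have "1 / \<nu> q \<le> 1 / (\<nu> q * (\<nu> (q-1) * \<nu> q))"
      using \<nu>01 p by (intro divide_left_mono) (auto intro: mult_right_le_one_le mult_pos_pos)
    also have "\<dots> \<le> 2 * (1 / (\<nu> q * \<nu> (q-1) * \<nu> q))"
    proof -
      have "0 < \<nu> q * \<nu> (q-1) * \<nu> q" using \<nu>01[of q] \<nu>01[of "q-1"] by simp
      thus ?thesis by (simp add: mult.assoc divide_right_mono)
    qed
    finally have "1 / \<nu> q \<le> 2 * (1 / (\<nu> q * \<nu> (q-1) * \<nu> q))" .
    hence "tv_norm M (\<mu> q) (\<mu>' q) * (1 / \<nu> q) \<le> tv_norm M (\<mu> q) (\<mu>' q) * (2 * (1 / (\<nu> q * \<nu> (q-1) * \<nu> q)))"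
      using tv0 by (intro mult_left_mono) auto
    thus ?thesis by (simp add: ac_simps)
  qed
  finally show ?thesis unfolding t_def[symmetric] ht hB T_def .
qed

lemma telescope: "0 \<le> (N::int) \<Longrightarrow> (\<Sum>l\<in>{0..N}. f l - f (l + 1)) = f 0 - (f (N + 1) :: real)"
proof (induction N rule: int_ge_induct)
  case base then show ?case by simp
next
  case (step N)
  have "{0..N+1} = insert (N+1) {0..N}" using step(1) by auto
  thus ?case using step by simp
qed

lemma main_bound:
  assumes \<pi>: "prob_space \<pi>" "sets \<pi> = sets M" and \<pi>': "prob_space \<pi>'" "sets \<pi>' = sets M"
    and q: "1 \<le> q" "q \<le> n"
  shows "\<bar>ln ((\<integral>v. beta (\<lambda>_. \<pi>) q v \<partial>\<pi>) / (\<integral>v. beta (\<lambda>_. \<pi>) (q+1) v \<partial>\<pi>))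
         - ln ((\<integral>v. beta (\<lambda>_. \<pi>') q v \<partial>\<pi>') / (\<integral>v. beta (\<lambda>_. \<pi>') (q+1) v \<partial>\<pi>'))\<bar>
     \<le> 2 * (\<Sum>l\<in>{0..n+1-q}. (1 / (\<nu> q * \<nu> (q+l-1) * \<nu> (q+l))) *
                     (\<Prod>k\<in>{q+1..q+l-1}. 1 - \<nu> k)) * tv_norm M \<pi> \<pi>'"
proof -
  define H where "H = (\<lambda>j (i::int). if i < j then \<pi>' else \<pi>)"
  have gH: "good (H j)" for j unfolding good_def H_def using \<pi> \<pi>' by auto
  define R where "R = (\<lambda>\<mu>. ln ((\<integral>v. beta \<mu> q v \<partial>\<mu> q) / (\<integral>v. beta \<mu> (q+1) v \<partial>\<mu> (q+1))))"
  define G where "G = (\<lambda>l. R (H (q + l)))"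
  have G0: "G 0 = R (\<lambda>_. \<pi>)"
  proof -
    have "beta (H q) q = beta (\<lambda>_. \<pi>) q" by (rule beta_cong) (auto simp: H_def)
    moreover have "beta (H q) (q+1) = beta (\<lambda>_. \<pi>) (q+1)" by (rule beta_cong) (auto simp: H_def)
    ultimately show ?thesis unfolding G_def R_def by (simp add: H_def)
  qed
  have GN: "G (n + 1 - q + 1) = R (\<lambda>_. \<pi>')"
  proof -
    have e: "q + (n + 1 - q + 1) = n + 2" by simp
    have "beta (H (n+2)) q = beta (\<lambda>_. \<pi>') q" by (rule beta_cong) (auto simp: H_def)
    moreover have "beta (H (n+2)) (q+1) = beta (\<lambda>_. \<pi>') (q+1)" by (rule beta_cong) (auto simp: H_def)
    ultimately show ?thesis unfolding G_def R_def e using q by (simp add: H_def)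
  qed
  define tv where "tv = tv_norm M \<pi> \<pi>'"
  have tmb: "\<bar>G l - G (l + 1)\<bar> \<le> 2 * ((1 / (\<nu> q * \<nu> (q+l-1) * \<nu> (q+l))) * (\<Prod>k\<in>{q+1..q+l-1}. 1 - \<nu> k)) * tv"
    if l: "l \<in> {0..n+1-q}" for l
  proof -
    define j where "j = q + l"
    have eq: "H (j+1) i = H j i" if "i \<noteq> j" for i using that by (auto simp: H_def)
    have Hj: "H j j = \<pi>" "H (j+1) j = \<pi>'" by (auto simp: H_def)
    have GG: "G l = R (H j)" "G (l+1) = R (H (j+1))" unfolding G_def j_def by (simp_all add: add.assoc)
    show ?thesis
    proof (cases "l = 0")
      case True
      hence "j = q" unfolding j_def by simp
      hence jq: "j = q" .
      have "\<bar>R (H j) - R (H (j+1))\<bar>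
          \<le> 2 * (1 / (\<nu> q * \<nu> (q+0-1) * \<nu> (q+0)) * (\<Prod>k\<in>{q+1..q+0-1}. 1 - \<nu> k)) * tv_norm M (H j q) (H (j+1) q)"
        unfolding R_def by (rule step_q[OF gH gH q(2)]) (use eq jq in auto)
      thus ?thesis using GG Hj jq True unfolding tv_def by simp
    next
      case False
      hence jj: "q + 1 \<le> j" "j \<le> n + 1" using l unfolding j_def by auto
      have "\<bar>R (H j) - R (H (j+1))\<bar>
          \<le> 2 * (1 / (\<nu> q * \<nu> (j-1) * \<nu> j) * (\<Prod>k\<in>{q+1..j-1}. 1 - \<nu> k)) * tv_norm M (H j j) (H (j+1) j)"
        unfolding R_def by (rule step_mid[OF gH gH jj]) (rule eq)
      thus ?thesis using GG Hj unfolding j_def tv_def by (simp add: add.assoc)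
    qed
  qed
  have "R (\<lambda>_. \<pi>) - R (\<lambda>_. \<pi>') = (\<Sum>l\<in>{0..n+1-q}. G l - G (l + 1))"
    using telescope[of "n+1-q" G] q G0 GN by simp
  hence "\<bar>R (\<lambda>_. \<pi>) - R (\<lambda>_. \<pi>')\<bar> \<le> (\<Sum>l\<in>{0..n+1-q}. \<bar>G l - G (l + 1)\<bar>)"
    by (simp add: sum_abs)
  also have "\<dots> \<le> (\<Sum>l\<in>{0..n+1-q}. 2 * ((1 / (\<nu> q * \<nu> (q+l-1) * \<nu> (q+l))) * (\<Prod>k\<in>{q+1..q+l-1}. 1 - \<nu> k)) * tv)"
    by (rule sum_mono) (rule tmb)
  also have "\<dots> = 2 * (\<Sum>l\<in>{0..n+1-q}. (1 / (\<nu> q * \<nu> (q+l-1) * \<nu> (q+l))) * (\<Prod>k\<in>{q+1..q+l-1}. 1 - \<nu> k)) * tv"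
    by (simp add: sum_distrib_left sum_distrib_right mult.assoc)
  finally show ?thesis unfolding R_def tv_def .
qed

end


theorem lemma7:
  fixes M \<pi> \<pi>' :: "'v measure"
    and K :: "int \<Rightarrow> 'x \<Rightarrow> 'v \<Rightarrow> 'v \<Rightarrow> real"
    and \<nu> :: "int \<Rightarrow> real"
    and n q :: int
    and x :: "int \<Rightarrow> 'x"
  assumes n: "1 \<le> n"
    and q: "1 \<le> q" "q \<le> n"
    and \<pi>: "prob_space \<pi>" "sets \<pi> = sets M"
    and \<pi>': "prob_space \<pi>'" "sets \<pi>' = sets M"
    and K_meas: "\<And>i y. (\<lambda>(v, w). K i y v w) \<in> borel_measurable (M \<Otimes>\<^sub>M M)"
    and K_nonneg: "\<And>i y v w. v \<in> space M \<Longrightarrow> w \<in> space M \<Longrightarrow> 0 \<le> K i y v w"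
    and K_prob: "\<And>i v w. v \<in> space M \<Longrightarrow> w \<in> space M \<Longrightarrow>
                   ((\<lambda>y. K i y v w) has_sum 1) UNIV"
    and H2_pos: "\<And>i. 0 < \<nu> i"
    and H2: "\<And>i y v w. v \<in> space M \<Longrightarrow> w \<in> space M \<Longrightarrow>
                   \<nu> i \<le> K i y v w \<and> K i y v w \<le> 1"
  shows "\<bar>ln (cond_prob \<pi> K n q x) - ln (cond_prob \<pi>' K n q x)\<bar>
           \<le> 2 * (\<Sum>l\<in>{0..n+1-q}. (1 / (\<nu> q * \<nu> (q+l-1) * \<nu> (q+l))) *
                     (\<Prod>k\<in>{q+1..q+l-1}. 1 - \<nu> k)) * tv_norm M \<pi> \<pi>'"
proof -
  interpret H: hmm M K \<nu> n x by unfold_locales (use K_meas H2_pos H2 in auto)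
  have c1: "cond_prob \<pi> K n q x = (\<integral>v. H.beta (\<lambda>_. \<pi>) q v \<partial>\<pi>) / (\<integral>v. H.beta (\<lambda>_. \<pi>) (q+1) v \<partial>\<pi>)"
    unfolding cond_prob_def using H.obs_beta[OF \<pi>, of q] H.obs_beta[OF \<pi>, of "q+1"] q by simp
  have c2: "cond_prob \<pi>' K n q x = (\<integral>v. H.beta (\<lambda>_. \<pi>') q v \<partial>\<pi>') / (\<integral>v. H.beta (\<lambda>_. \<pi>') (q+1) v \<partial>\<pi>')"
    unfolding cond_prob_def using H.obs_beta[OF \<pi>', of q] H.obs_beta[OF \<pi>', of "q+1"] q by simp
  show ?thesis unfolding c1 c2 by (rule H.main_bound[OF \<pi> \<pi>' q])
qed

end
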